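(* If $X$ satisfies ${\sf S}_1(\mathcal{G}_K,\mathcal{G}_{D_\Gamma})$, then $X$ is productively weakly Menger: for every weakly Menger space $Y$, $X\times Y$ is weakly Menger.
   Context: All spaces are infinite ${\sf T}_1$ topological spaces. $\mathcal{G}_K$ is the family of all collections $\mathcal{U}$ of ${\sf G}_\delta$ subsets of $X$ with $X\notin\mathcal{U}$ such that each compact subset of $X$ is contained in some member of $\mathcal{U}$. $\mathcal{G}_{D_\Gamma}$ is the family of infinite collections $\mathcal{U}$ of ${\sf G}_\delta$ subsets of $X$ such that for each nonempty open $U\subseteq X$, $\{V\in\mathcal{U}:U\cap V=\emptyset\}$ is finite. ${\sf S}_1(\mathcal{A},\mathcal{B})$: for each sequence $(A_n)$ of elements of $\mathcal{A}$ there are $B_n\in A_n$ with $\{B_n:n\in\mathbb{N}\}\in\mathcal{B}$. A space is weakly Menger if for each sequence $(\mathcal{U}_n)$ of open covers there are finite $\mathcal{V}_n\subseteq\mathcal{U}_n$ such that $\bigcup_n\bigcup\mathcal{V}_n$ is dense. *)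

theory Defs
  imports "HOL-Analysis.Analysis"
begin

definition G_K :: "'a topology \<Rightarrow> 'a set set set" where
  "G_K X = {\<U>. (\<forall>V\<in>\<U>. gdelta_in X V) \<and> topspace X \<notin> \<U> \<and>
                 (\<forall>K. compactin X K \<longrightarrow> (\<exists>V\<in>\<U>. K \<subseteq> V))}"

definition G_DGamma :: "'a topology \<Rightarrow> 'a set set set" where
  "G_DGamma X = {\<U>. infinite \<U> \<and> (\<forall>V\<in>\<U>. gdelta_in X V) \<and>
                 (\<forall>U. openin X U \<and> U \<noteq> {} \<longrightarrow> finite {V\<in>\<U>. U \<inter> V = {}})}"

definition S1 :: "'x set set \<Rightarrow> 'x set set \<Rightarrow> bool" where
  "S1 A B \<longleftrightarrow> (\<forall>F :: nat \<Rightarrow> 'x set. (\<forall>n. F n \<in> A) \<longrightarrow>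
       (\<exists>b :: nat \<Rightarrow> 'x. (\<forall>n. b n \<in> F n) \<and> range b \<in> B))"

definition open_cover :: "'a topology \<Rightarrow> 'a set set \<Rightarrow> bool" where
  "open_cover X \<U> \<longleftrightarrow> (\<forall>U\<in>\<U>. openin X U) \<and> \<Union>\<U> = topspace X"

definition weakly_Menger :: "'a topology \<Rightarrow> bool" where
  "weakly_Menger X \<longleftrightarrow> (\<forall>\<U> :: nat \<Rightarrow> 'a set set. (\<forall>n. open_cover X (\<U> n)) \<longrightarrow>
      (\<exists>\<V> :: nat \<Rightarrow> 'a set set. (\<forall>n. finite (\<V> n) \<and> \<V> n \<subseteq> \<U> n) \<and>
          X closure_of (\<Union>n. \<Union>(\<V> n)) = topspace X))"

end

theory Submission imports Defs begin

lemma lemA: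
  fixes Ws :: "nat \<Rightarrow> ('a \<times> 'b) set set" and X :: "'a topology" and Y :: "'b topology"
  assumes wm: "weakly_Menger Y" and K: "compactin X K"
    and cov: "\<And>k. open_cover (prod_topology X Y) (Ws k)"
  shows "\<exists>Vs H D. (\<forall>k. finite (Vs k) \<and> Vs k \<subseteq> Ws k) \<and> gdelta_in X H \<and> K \<subseteq> H
     \<and> Y closure_of D = topspace Y \<and> H \<times> D \<subseteq> (\<Union>k. \<Union>(Vs k))"
proof -
  define C where "C k = {V. openin Y V \<and> (\<exists>G F. openin X G \<and> K \<subseteq> G \<and> finite F \<and> F \<subseteq> Ws k \<and> G \<times> V \<subseteq> \<Union>F)}" for k
  have KX: "K \<subseteq> topspace X" using K compactin_subset_topspace by blast
  have oc: "open_cover Y (C k)" for k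
    unfolding open_cover_def
  proof
    show "\<forall>U\<in>C k. openin Y U" by (simp add: C_def)
    show "\<Union> (C k) = topspace Y"
    proof
      show "\<Union> (C k) \<subseteq> topspace Y" using openin_subset by (auto simp: C_def)
      show "topspace Y \<subseteq> \<Union> (C k)"
      proof
        fix y assume y: "y \<in> topspace Y"
        have c: "compactin (prod_topology X Y) (K \<times> {y})"
          using K y by (simp add: compactin_Times)
        have "K \<times> {y} \<subseteq> \<Union>(Ws k)" using cov[of k] KX y by (auto simp: open_cover_def)
        then obtain F where F: "finite F" "F \<subseteq> Ws k" "K \<times> {y} \<subseteq> \<Union>F"
          using compactinD[OF c, of "Ws k"] cov[of k] by (auto simp: open_cover_def)
        have "openin (prod_topology X Y) (\<Union>F)" using F cov[of k] by (auto simp: open_cover_def)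
        then obtain U V where "openin X U" "openin Y V" "K \<subseteq> U" "y \<in> V" "U \<times> V \<subseteq> \<Union>F"
          using tube_lemma_left[OF _ K y F(3)] by blast
        then have "V \<in> C k" using F by (auto simp: C_def)
        then show "y \<in> \<Union>(C k)" using \<open>y \<in> V\<close> by blast
      qed
    qed
  qed
  then obtain E where E: "\<And>k. finite (E k) \<and> E k \<subseteq> C k" and dense: "Y closure_of (\<Union>k. \<Union>(E k)) = topspace Y"
  proof -
    have "\<forall>n. open_cover Y (C n)" using oc by blast
    moreover have "(\<forall>n. open_cover Y (C n)) \<longrightarrow> (\<exists>\<V>. (\<forall>n. finite (\<V> n) \<and> \<V> n \<subseteq> C n) \<and> Y closure_of (\<Union>n. \<Union>(\<V> n)) = topspace Y)"
      using wm unfolding weakly_Menger_def by (erule_tac x=C in allE)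
    ultimately have "\<exists>\<V>. (\<forall>n. finite (\<V> n) \<and> \<V> n \<subseteq> C n) \<and> Y closure_of (\<Union>n. \<Union>(\<V> n)) = topspace Y"
      by (rule rev_mp)
    then show ?thesis using that by blast
  qed
  have "\<forall>k V. \<exists>G F. V \<in> E k \<longrightarrow> (openin X G \<and> K \<subseteq> G \<and> finite F \<and> F \<subseteq> Ws k \<and> G \<times> V \<subseteq> \<Union>F)"
    using E by (auto simp: C_def)
  then obtain GG FF where GF: "\<And>k V. V \<in> E k \<Longrightarrow> openin X (GG k V) \<and> K \<subseteq> GG k V \<and> finite (FF k V) \<and> FF k V \<subseteq> Ws k \<and> GG k V \<times> V \<subseteq> \<Union>(FF k V)"
    by metis
  define Vs where "Vs k = \<Union>(FF k ` E k)" for k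
  define Oo where "Oo k = topspace X \<inter> \<Inter>(GG k ` E k)" for k
  define H where "H = \<Inter>(insert (topspace X) (range Oo))"
  have oO: "openin X (Oo k)" for k
  proof (cases "E k = {}")
    case True then show ?thesis by (simp add: Oo_def)
  next
    case False
    have "openin X (\<Inter>(GG k ` E k))" using False E[of k] GF by (intro openin_Inter) auto
    then show ?thesis unfolding Oo_def by (simp add: openin_Int)
  qed
  show ?thesis
  proof (intro exI conjI allI)
    show "finite (Vs k)" for k using E GF by (auto simp: Vs_def)
    show "Vs k \<subseteq> Ws k" for k using GF by (auto simp: Vs_def)
    show "gdelta_in X H" unfolding H_def
      by (intro gdelta_in_Inter) (auto intro: open_imp_gdelta_in oO)
    show "K \<subseteq> H" using KX GF by (auto simp: H_def Oo_def) blast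
    show "Y closure_of (\<Union>k. \<Union>(E k)) = topspace Y" by (rule dense)
    show "H \<times> (\<Union>k. \<Union>(E k)) \<subseteq> (\<Union>k. \<Union>(Vs k))"
    proof
      fix p assume "p \<in> H \<times> (\<Union>k. \<Union>(E k))"
      then obtain x y k V where p: "p = (x,y)" "x \<in> H" "V \<in> E k" "y \<in> V" by auto
      then have "x \<in> GG k V" by (auto simp: H_def Oo_def)
      then have "(x,y) \<in> \<Union>(FF k V)" using GF[OF p(3)] p(4) by blast
      then show "p \<in> (\<Union>k. \<Union>(Vs k))" using p(1,3) by (auto simp: Vs_def)
    qed
  qed
qed

theorem theorem5p15:
  fixes X :: "'a topology" and Y :: "'b topology"
  assumes "t1_space X" and "infinite (topspace X)"
    and "S1 (G_K X) (G_DGamma X)"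
    and "t1_space Y" and "infinite (topspace Y)"
    and "weakly_Menger Y"
  shows "weakly_Menger (prod_topology X Y)"
  unfolding weakly_Menger_def
proof (intro allI impI)
  note S1 = assms(3) and wm = assms(6)
  fix W :: "nat \<Rightarrow> ('a \<times> 'b) set set"
  assume W: "\<forall>n. open_cover (prod_topology X Y) (W n)"
  define Ws where "Ws n k = W (prod_encode (n,k))" for n k
  define Q where "Q n K t = (case t of (Vs,H,D) \<Rightarrow> (\<forall>k. finite (Vs k) \<and> Vs k \<subseteq> Ws n k) \<and> gdelta_in X H \<and> K \<subseteq> H
     \<and> Y closure_of D = topspace Y \<and> H \<times> D \<subseteq> (\<Union>k. \<Union>(Vs k)))" for n K and t :: "(nat \<Rightarrow> ('a \<times> 'b) set set) \<times> 'a set \<times> 'b set"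
  have ex: "\<exists>t. Q n K t" if K: "compactin X K" for n K
  proof -
    have cov: "\<And>k. open_cover (prod_topology X Y) (Ws n k)" using W by (simp add: Ws_def)
    from lemA[where Ws="Ws n", OF wm K cov] obtain Vs H D where "(\<forall>k. finite (Vs k) \<and> Vs k \<subseteq> Ws n k) \<and> gdelta_in X H \<and> K \<subseteq> H
     \<and> Y closure_of D = topspace Y \<and> H \<times> D \<subseteq> (\<Union>k. \<Union>(Vs k))" by (elim exE)
    then have "Q n K (Vs,H,D)" unfolding Q_def by simp
    then show ?thesis by blast
  qed
  define VV where "VV n K = fst (SOME t. Q n K t)" for n K
  define HH where "HH n K = fst (snd (SOME t. Q n K t))" for n K
  define DD where "DD n K = snd (snd (SOME t. Q n K t))" for n K
  have A: "(\<forall>k. finite (VV n K k) \<and> VV n K k \<subseteq> Ws n k) \<and> gdelta_in X (HH n K) \<and> K \<subseteq> HH n K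
     \<and> Y closure_of (DD n K) = topspace Y \<and> HH n K \<times> DD n K \<subseteq> (\<Union>k. \<Union>(VV n K k))"
    if K: "compactin X K" for n K
  proof -
    obtain a b d where eq: "(SOME t. Q n K t) = (a,b,d)" by (metis prod_cases3)
    have "Q n K (a,b,d)" using someI_ex[OF ex[of K n, OF K]] unfolding eq .
    then show ?thesis unfolding VV_def HH_def DD_def eq Q_def by simp
  qed
  have A1: "\<And>k. finite (VV n K k) \<and> VV n K k \<subseteq> Ws n k" and A2: "gdelta_in X (HH n K)"
    and A3: "K \<subseteq> HH n K" and A4: "Y closure_of (DD n K) = topspace Y"
    and A5: "HH n K \<times> DD n K \<subseteq> (\<Union>k. \<Union>(VV n K k))" if K: "compactin X K" for n K
    using A[OF K] by auto
  have clsub: "(prod_topology X Y) closure_of S \<subseteq> topspace (prod_topology X Y)" for S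
    by (rule closure_of_subset_topspace)
  show "\<exists>\<V>. (\<forall>n. finite (\<V> n) \<and> \<V> n \<subseteq> W n) \<and>
          prod_topology X Y closure_of (\<Union>n. \<Union>(\<V> n)) = topspace (prod_topology X Y)"
  proof (cases "\<exists>n K. compactin X K \<and> HH n K = topspace X")
    case True
    then obtain n0 K0 where K0: "compactin X K0" "HH n0 K0 = topspace X" by blast
    define V where "V m = (case prod_decode m of (n,k) \<Rightarrow> if n = n0 then VV n0 K0 k else {})" for m
    have fin: "finite (V m) \<and> V m \<subseteq> W m" for m
    proof -
      obtain n k where nk: "prod_decode m = (n,k)" by (cases "prod_decode m")
      then have m: "m = prod_encode (n,k)" by (metis prod_decode_inverse)
      show ?thesis using A1[OF K0(1)] nk m by (auto simp: V_def Ws_def)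
    qed
    have "topspace X \<times> DD n0 K0 \<subseteq> (\<Union>m. \<Union>(V m))"
    proof
      fix p assume "p \<in> topspace X \<times> DD n0 K0"
      then have "p \<in> HH n0 K0 \<times> DD n0 K0" using K0(2) by simp
      then have "p \<in> (\<Union>k. \<Union>(VV n0 K0 k))" using A5[OF K0(1)] by (rule subsetD[rotated])
      then obtain k where "p \<in> \<Union>(VV n0 K0 k)" by (rule UN_E)
      moreover have "V (prod_encode (n0,k)) = VV n0 K0 k" by (simp add: V_def)
      ultimately show "p \<in> (\<Union>m. \<Union>(V m))" by (metis UN_I UNIV_I)
    qed
    then have "prod_topology X Y closure_of (topspace X \<times> DD n0 K0) \<subseteq> prod_topology X Y closure_of (\<Union>m. \<Union>(V m))"
      by (rule closure_of_mono)
    moreover have "prod_topology X Y closure_of (topspace X \<times> DD n0 K0) = topspace (prod_topology X Y)"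
      using A4[OF K0(1)] by (simp add: closure_of_Times)
    ultimately show ?thesis using fin clsub by (metis subset_antisym)
  next
    case False
    define F where "F n = HH n ` {K. compactin X K}" for n
    have FG: "F n \<in> G_K X" for n
    proof -
      have g: "\<forall>V\<in>F n. gdelta_in X V" using A2 by (auto simp: F_def)
      have t: "topspace X \<notin> F n" using False by (auto simp: F_def)
      have k: "\<forall>K. compactin X K \<longrightarrow> (\<exists>V\<in>F n. K \<subseteq> V)"
      proof (intro allI impI)
        fix K assume K: "compactin X K"
        then have "HH n K \<in> F n" "K \<subseteq> HH n K" using A3[OF K] by (auto simp: F_def)
        then show "\<exists>V\<in>F n. K \<subseteq> V" by blast
      qed
      show ?thesis unfolding G_K_def using g t k by blast
    qed
    then obtain b where b: "\<And>n. b n \<in> F n" "range b \<in> G_DGamma X"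
      using S1 unfolding S1_def by blast
    have "\<forall>n. \<exists>K. compactin X K \<and> b n = HH n K" using b(1) by (auto simp: F_def)
    then obtain c where c: "\<And>n. compactin X (c n)" "\<And>n. b n = HH n (c n)" by metis
    define V where "V m = (case prod_decode m of (n,k) \<Rightarrow> VV n (c n) k)" for m
    have fin: "finite (V m) \<and> V m \<subseteq> W m" for m
    proof -
      obtain n k where nk: "prod_decode m = (n,k)" by (cases "prod_decode m")
      then have m: "m = prod_encode (n,k)" by (metis prod_decode_inverse)
      show ?thesis using A1[OF c(1)] nk m by (auto simp: V_def Ws_def)
    qed
    have sub: "HH n (c n) \<times> DD n (c n) \<subseteq> (\<Union>m. \<Union>(V m))" for n
    proof
      fix p assume "p \<in> HH n (c n) \<times> DD n (c n)"
      then have "p \<in> (\<Union>k. \<Union>(VV n (c n) k))" using A5[OF c(1)] by (rule subsetD[rotated])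
      then obtain k where "p \<in> \<Union>(VV n (c n) k)" by (rule UN_E)
      moreover have "V (prod_encode (n,k)) = VV n (c n) k" by (simp add: V_def)
      ultimately show "p \<in> (\<Union>m. \<Union>(V m))" by (metis UN_I UNIV_I)
    qed
    have "topspace (prod_topology X Y) \<subseteq> prod_topology X Y closure_of (\<Union>m. \<Union>(V m))"
    proof
      fix p assume p: "p \<in> topspace (prod_topology X Y)"
      obtain x y where xy: "p = (x,y)" by (cases p)
      show "p \<in> prod_topology X Y closure_of (\<Union>m. \<Union>(V m))"
        unfolding in_closure_of
      proof (intro conjI allI impI)
        show "p \<in> topspace (prod_topology X Y)" by (rule p)
        fix T assume T: "p \<in> T \<and> openin (prod_topology X Y) T"
        then obtain U V' where UV: "openin X U" "openin Y V'" "x \<in> U" "y \<in> V'" "U \<times> V' \<subseteq> T"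
          using T xy openin_prod_topology_alt[of X Y T] by blast
        have "infinite (range b)" "finite {V\<in>range b. U \<inter> V = {}}"
          using b(2) UV(1,3) unfolding G_DGamma_def by blast+
        then have "range b \<noteq> {V\<in>range b. U \<inter> V = {}}" by auto
        then obtain n where n: "U \<inter> b n \<noteq> {}" by blast
        then obtain x' where x': "x' \<in> U" "x' \<in> HH n (c n)" using c(2) by auto
        have "y \<in> Y closure_of DD n (c n)" using A4[OF c(1)] p xy by auto
        then obtain y' where y': "y' \<in> DD n (c n)" "y' \<in> V'"
          using UV unfolding in_closure_of by blast
        have "(x',y') \<in> (\<Union>m. \<Union>(V m))" using sub x' y' by blast
        moreover have "(x',y') \<in> T" using UV x' y' by blast
        ultimately show "\<exists>y. y \<in> (\<Union>m. \<Union>(V m)) \<and> y \<in> T" by blast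
      qed
    qed
    then show ?thesis using fin clsub by (metis subset_antisym)
  qed
qed

end
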